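(* Let $m$ be a universal probability and let $M$ be a universal semi-POVM. Then there exist $c_1>0$ and $c_2>0$ such that for every density matrix $\rho\in\mathrm{Her}(N)$ and every $s\in\Sigma^*$, $$c_1\,m(s)\le\operatorname{tr}(\rho M(s))\le c_2\,m(s).$$
   Context: $N$ is a fixed positive integer; $\Sigma^*$ is the set of finite binary strings. $\mathrm{Her}(N)$ is the set of $N\times N$ Hermitian matrices and $\mathrm{Her}_Q(N)$ those with entries in $\{a+ib:a,b\in\mathbb{Q}\}$; $A\leqslant B$ means $B-A$ is positive semi-definite. A density matrix is $\rho\in\mathrm{Her}(N)$, $0\leqslant\rho$, $\operatorname{tr}\rho=1$. A lower-computable semi-measure is a function $r:\Sigma^*\to[0,\infty)$ with $\sum_s r(s)\le 1$ such that there is a total recursive $f:\mathbb{N}\times\Sigma^*\to\mathbb{Q}$ with $\lim_{n}f(n,s)=r(s)$ and $f(n,s)\le f(n+1,s)$ for all $n,s$. A universal probability is a lower-computable semi-measure $m$ such that for every lower-computable semi-measure $r$ there is $c>0$ with $c\,r(s)\le m(s)$ for all $s$. A semi-POVM on $\Sigma^*$ is a map $R:\Sigma^*\to\mathrm{Her}(N)$ with $0\leqslant R(s)$ for all $s$ and $\sum_s R(s)\leqslant I$. A lower-computable semi-POVM is a semi-POVM $R$ for which there is a total recursive $f:\mathbb{N}\times\Sigma^*\to\mathrm{Her}_Q(N)$ with $\lim_{n}f(n,s)=R(s)$ and $f(n,s)\leqslant R(s)$ for all $n,s$. A universal semi-POVM is a lower-computable semi-POVM $M$ such that for every lower-computable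 semi-POVM $R$ there is $c>0$ with $c\,R(s)\leqslant M(s)$ for all $s\in\Sigma^*$. *)

theory Defs
  imports "HOL-Analysis.Analysis"
begin

type_synonym bstring = "bool list"

text \<open>Bijective coding of binary strings by natural numbers (bijective base 2).\<close>
fun str_code :: "bstring \<Rightarrow> nat" where
  "str_code [] = 0"
| "str_code (b # s) = 2 * str_code s + (if b then 2 else 1)"

datatype recf = Zr | Sc | Id nat | Cn recf "recf list" | Pr recf recf | Mn recf

inductive rec_eval :: "recf \<Rightarrow> nat list \<Rightarrow> nat \<Rightarrow> bool" where
  zero: "rec_eval Zr xs 0"
| succ: "rec_eval Sc (x # xs) (Suc x)"
| proj: "i < length xs \<Longrightarrow> rec_eval (Id i) xs (xs ! i)"
| comp: "list_all2 (\<lambda>g y. rec_eval g xs y) gs ys \<Longrightarrow> rec_eval f ys z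
          \<Longrightarrow> rec_eval (Cn f gs) xs z"
| pr0:  "rec_eval f xs z \<Longrightarrow> rec_eval (Pr f g) (0 # xs) z"
| prS:  "rec_eval (Pr f g) (n # xs) r \<Longrightarrow> rec_eval g (n # r # xs) z
          \<Longrightarrow> rec_eval (Pr f g) (Suc n # xs) z"
| mu:   "rec_eval f (n # xs) 0 \<Longrightarrow> (\<forall>m<n. \<exists>y. rec_eval f (m # xs) (Suc y))
          \<Longrightarrow> rec_eval (Mn f) xs n"

definition total_recursive2 :: "(nat \<Rightarrow> nat \<Rightarrow> nat) \<Rightarrow> bool" where
  "total_recursive2 g \<longleftrightarrow> (\<exists>r. \<forall>x y. rec_eval r [x, y] (g x y))"

text \<open>A function \<open>\<nat> \<times> \<Sigma>^* \<rightarrow> \<rat>\<close> is total recursive: some total recursive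
  functions compute, from (n, code of s), a numerator (as a difference of two naturals)
  and a positive denominator of its value.\<close>
definition rec_rat_fun :: "(nat \<Rightarrow> bstring \<Rightarrow> rat) \<Rightarrow> bool" where
  "rec_rat_fun f \<longleftrightarrow> (\<exists>a b d. total_recursive2 a \<and> total_recursive2 b \<and> total_recursive2 d \<and>
     (\<forall>n s. f n s = (of_nat (a n (str_code s)) - of_nat (b n (str_code s)))
                    / of_nat (Suc (d n (str_code s)))))"

definition semi_measure :: "(bstring \<Rightarrow> real) \<Rightarrow> bool" where
  "semi_measure r \<longleftrightarrow> (\<forall>s. 0 \<le> r s) \<and> r summable_on UNIV \<and> (\<Sum>\<^sub>\<infinity>s. r s) \<le> 1"

definition lower_computable_semi_measure :: "(bstring \<Rightarrow> real) \<Rightarrow> bool" where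
  "lower_computable_semi_measure r \<longleftrightarrow> semi_measure r \<and>
     (\<exists>f. rec_rat_fun f \<and> (\<forall>s. (\<lambda>n. real_of_rat (f n s)) \<longlonglongrightarrow> r s)
          \<and> (\<forall>n s. f n s \<le> f (Suc n) s))"

definition universal_probability :: "(bstring \<Rightarrow> real) \<Rightarrow> bool" where
  "universal_probability m \<longleftrightarrow> lower_computable_semi_measure m \<and>
     (\<forall>r. lower_computable_semi_measure r \<longrightarrow> (\<exists>c>0. \<forall>s. c * r s \<le> m s))"

section \<open>Hermitian matrices (N = CARD('n))\<close>

type_synonym 'n cmat = "complex^'n^'n"

definition adjoint_mat :: "'n::finite cmat \<Rightarrow> 'n cmat" where
  "adjoint_mat A = (\<chi> i j. cnj (A $ j $ i))"

definition hermitian :: "'n::finite cmat \<Rightarrow> bool" where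
  "hermitian A \<longleftrightarrow> adjoint_mat A = A"

definition psd :: "'n::finite cmat \<Rightarrow> bool" where
  "psd A \<longleftrightarrow> hermitian A \<and>
     (\<forall>x::complex^'n. 0 \<le> Re (\<Sum>i\<in>UNIV. \<Sum>j\<in>UNIV. cnj (x $ i) * A $ i $ j * x $ j))"

definition loewner_le :: "'n::finite cmat \<Rightarrow> 'n cmat \<Rightarrow> bool" where
  "loewner_le A B \<longleftrightarrow> hermitian A \<and> hermitian B \<and> psd (B - A)"

definition density_matrix :: "'n::finite cmat \<Rightarrow> bool" where
  "density_matrix \<rho> \<longleftrightarrow> hermitian \<rho> \<and> psd \<rho> \<and> trace \<rho> = 1"

definition gauss_rat :: "complex \<Rightarrow> bool" where
  "gauss_rat z \<longleftrightarrow> Re z \<in> \<rat> \<and> Im z \<in> \<rat>"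

definition her_Q :: "'n::finite cmat \<Rightarrow> bool" where
  "her_Q A \<longleftrightarrow> hermitian A \<and> (\<forall>i j. gauss_rat (A $ i $ j))"

definition semi_POVM :: "(bstring \<Rightarrow> 'n::finite cmat) \<Rightarrow> bool" where
  "semi_POVM R \<longleftrightarrow> (\<forall>s. psd (R s)) \<and> R summable_on UNIV \<and>
     loewner_le (\<Sum>\<^sub>\<infinity>s. R s) (mat 1)"

definition rec_herQ_fun :: "(nat \<Rightarrow> bstring \<Rightarrow> 'n::finite cmat) \<Rightarrow> bool" where
  "rec_herQ_fun f \<longleftrightarrow> (\<forall>n s. her_Q (f n s)) \<and>
     (\<forall>i j. \<exists>p q. rec_rat_fun p \<and> rec_rat_fun q \<and>
        (\<forall>n s. Re (f n s $ i $ j) = real_of_rat (p n s) \<and> Im (f n s $ i $ j) = real_of_rat (q n s)))"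

definition lower_computable_semi_POVM :: "(bstring \<Rightarrow> 'n::finite cmat) \<Rightarrow> bool" where
  "lower_computable_semi_POVM R \<longleftrightarrow> semi_POVM R \<and>
     (\<exists>f. rec_herQ_fun f \<and> (\<forall>s. (\<lambda>n. f n s) \<longlonglongrightarrow> R s) \<and> (\<forall>n s. loewner_le (f n s) (R s)))"

definition universal_semi_POVM :: "(bstring \<Rightarrow> 'n::finite cmat) \<Rightarrow> bool" where
  "universal_semi_POVM M \<longleftrightarrow> lower_computable_semi_POVM M \<and>
     (\<forall>R::bstring \<Rightarrow> 'n cmat. lower_computable_semi_POVM R \<longrightarrow>
        (\<exists>c>0. \<forall>s. loewner_le (c *\<^sub>R R s) (M s)))"

end

theory Submission
  imports Defs
begin
definition sesq :: "'n::finite cmat \<Rightarrow> complex^'n \<Rightarrow> complex^'n \<Rightarrow> complex" where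
  "sesq A x y = (\<Sum>i\<in>UNIV. \<Sum>j\<in>UNIV. cnj (x $ i) * A $ i $ j * y $ j)"
lemma herm_entry: "hermitian A \<Longrightarrow> A $ j $ i = cnj (A $ i $ j)"
  unfolding hermitian_def adjoint_mat_def by (metis vec_lambda_beta)
lemma axis_c: "axis i (1::complex) $ k = (if k = i then 1 else 0)"
  by (simp add: axis_def)
lemma sum_delta_r: "(\<Sum>k\<in>(UNIV::'n::finite set). (f k::complex) * (if k = j then 1 else 0)) = f j"
proof -
  have "(\<Sum>k\<in>(UNIV::'n set). f k * (if k = j then 1 else 0)) = (\<Sum>k\<in>UNIV. if k = j then f k else 0)"
    by (intro sum.cong) auto
  then show ?thesis by simp
qed
lemma sum_delta_l: "(\<Sum>k\<in>(UNIV::'n::finite set). cnj (if k = j then 1 else 0) * (f k::complex)) = f j"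
proof -
  have "(\<Sum>k\<in>(UNIV::'n set). cnj (if k = j then 1 else 0) * f k) = (\<Sum>k\<in>UNIV. if k = j then f k else 0)"
    by (intro sum.cong) auto
  then show ?thesis by simp
qed
lemma sesq_axis: "sesq A (axis i 1) (axis j 1) = A $ i $ j"
  unfolding sesq_def axis_c sum_delta_r by (rule sum_delta_l)
lemma sesq_herm: assumes H: "hermitian A" shows "sesq A y x = cnj (sesq A x y)"
proof -
  have "cnj (sesq A x y) = (\<Sum>i\<in>UNIV. \<Sum>j\<in>UNIV. x $ i * cnj (A $ i $ j) * cnj (y $ j))"
    unfolding sesq_def by simp
  also have "\<dots> = (\<Sum>i\<in>UNIV. \<Sum>j\<in>UNIV. cnj (y $ j) * A $ j $ i * x $ i)"
  proof (intro sum.cong refl)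
    fix i j
    have "A $ j $ i = cnj (A $ i $ j)" by (rule herm_entry[OF H])
    then show "x $ i * cnj (A $ i $ j) * cnj (y $ j) = cnj (y $ j) * A $ j $ i * x $ i"
      by (simp only: mult.commute mult.left_commute)
  qed
  also have "\<dots> = sesq A y x" unfolding sesq_def by (rule sum.swap)
  finally show ?thesis by simp
qed
lemma sesq_diff_l: "sesq A (x - y) z = sesq A x z - sesq A y z"
  unfolding sesq_def by (simp add: algebra_simps sum_subtractf)
lemma sesq_diff_r: "sesq A z (x - y) = sesq A z x - sesq A z y"
  unfolding sesq_def by (simp add: algebra_simps sum_subtractf)
lemma sesq_scale_l: "sesq A (c *s x) z = cnj c * sesq A x z"
  unfolding sesq_def by (simp add: sum_distrib_left mult.assoc)
lemma sesq_scale_r: "sesq A z (c *s x) = c * sesq A z x"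
  unfolding sesq_def by (simp add: sum_distrib_left mult.assoc mult.left_commute)
lemma sesq_expand:
  "sesq A (x - l *s y) (x - l *s y) =
     sesq A x x - l * sesq A x y - cnj l * sesq A y x + cnj l * l * sesq A y y"
  by (simp add: sesq_diff_l sesq_diff_r sesq_scale_l sesq_scale_r algebra_simps)
lemma psd_sesq: "psd A \<Longrightarrow> 0 \<le> Re (sesq A x x)"
  unfolding psd_def sesq_def by blast

lemma cs_psd:
  assumes "psd A"
  shows "(cmod (sesq A x y))^2 \<le> Re (sesq A x x) * Re (sesq A y y)"
proof -
  have H: "hermitian A" using assms psd_def by blast
  define b where "b = sesq A y x"
  define C where "C = Re (sesq A y y)"
  define Ax where "Ax = Re (sesq A x x)"
  have xy: "sesq A x y = cnj b" using sesq_herm[OF H, of x y] b_def by simp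
  have yy: "sesq A y y = of_real C"
  proof -
    have "sesq A y y = cnj (sesq A y y)" using sesq_herm[OF H, of y y] by simp
    then show ?thesis unfolding C_def by (metis Reals_cnj_iff complex_is_Real_iff of_real_Re)
  qed
  have key: "0 \<le> Ax - 2 * t * (cmod b)^2 + t^2 * (cmod b)^2 * C" for t :: real
  proof -
    have "0 \<le> Re (sesq A (x - (of_real t * b) *s y) (x - (of_real t * b) *s y))"
      by (rule psd_sesq[OF assms])
    also have "sesq A (x - (of_real t * b) *s y) (x - (of_real t * b) *s y)
       = sesq A x x - of_real t * (b * cnj b) - of_real t * (cnj b * b) + of_real t * of_real t * (cnj b * b) * of_real C"
      unfolding sesq_expand xy yy b_def[symmetric] by (simp add: mult.assoc mult.left_commute)
    also have "\<dots> = sesq A x x - of_real (2 * t * (cmod b)^2 - t^2 * (cmod b)^2 * C)"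
    proof -
      define q where "q = (cmod b)^2"
      have bb1: "b * cnj b = of_real q" unfolding q_def by (rule complex_norm_square[symmetric])
      have bb2: "cnj b * b = of_real q" using bb1 by (simp only: mult.commute)
      show ?thesis unfolding bb1 bb2 q_def[symmetric] by (simp add: algebra_simps power2_eq_square)
    qed
    also have "Re \<dots> = Ax - 2 * t * (cmod b)^2 + t^2 * (cmod b)^2 * C"
      unfolding Ax_def by simp
    finally show ?thesis .
  qed
  have "(cmod b)^2 \<le> Ax * C"
  proof (cases "C > 0")
    case True
    have "0 \<le> Ax - 2 * (1/C) * (cmod b)^2 + (1/C)^2 * (cmod b)^2 * C" by (rule key)
    also have "\<dots> = Ax - (cmod b)^2 / C" using True by (simp add: field_simps power2_eq_square)
    finally show ?thesis using True by (simp add: field_simps)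
  next
    case False
    have C0: "C = 0" using False psd_sesq[OF assms, of y] C_def by simp
    show ?thesis
    proof (rule ccontr)
      assume "\<not> ?thesis"
      then have bp: "(cmod b)^2 > 0" using C0 by simp
      have "0 \<le> Ax - 2 * ((Ax+1)/(2*(cmod b)^2)) * (cmod b)^2" using key[of "(Ax+1)/(2*(cmod b)^2)"] C0 by simp
      also have "\<dots> = -1" using bp by (simp add: field_simps)
      finally show False by simp
    qed
  qed
  then show ?thesis using xy Ax_def C_def by simp
qed

lemma psd_diag: "psd A \<Longrightarrow> 0 \<le> Re (A $ i $ i)"
proof -
  assume "psd A"
  from psd_sesq[OF this, of "axis i 1"] show ?thesis by (simp only: sesq_axis)
qed

lemma herm_diag_real: "hermitian A \<Longrightarrow> A $ i $ i = of_real (Re (A $ i $ i))"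
  using herm_entry[of A i i] by (simp add: complex_eq_iff)

lemma amgm: "(a::real) * b \<le> ((a + b)/2)^2"
proof -
  have "((a + b)/2)^2 - a * b = ((a - b)/2)^2"
    by (simp add: power2_eq_square field_simps)
  then show ?thesis using zero_le_power2[of "(a - b)/2"] by linarith
qed

lemma psd_entry_sq: "psd A \<Longrightarrow> (cmod (A $ i $ j))^2 \<le> Re (A $ i $ i) * Re (A $ j $ j)"
proof -
  assume "psd A"
  from cs_psd[OF this, of "axis i 1" "axis j 1"] show ?thesis by (simp only: sesq_axis)
qed

lemma psd_entry: "psd A \<Longrightarrow> cmod (A $ i $ j) \<le> (Re (A $ i $ i) + Re (A $ j $ j)) / 2"
proof -
  assume a: "psd A"
  have "(cmod (A $ i $ j))^2 \<le> ((Re (A $ i $ i) + Re (A $ j $ j)) / 2)^2"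
    using psd_entry_sq[OF a, of i j] amgm[of "Re (A $ i $ i)" "Re (A $ j $ j)"] by linarith
  moreover have "0 \<le> (Re (A $ i $ i) + Re (A $ j $ j)) / 2"
    using psd_diag[OF a, of i] psd_diag[OF a, of j] by simp
  ultimately show ?thesis by (rule power2_le_imp_le)
qed
definition tr2 :: "'n::finite cmat \<Rightarrow> 'n cmat \<Rightarrow> complex" where
  "tr2 R B = (\<Sum>i\<in>UNIV. \<Sum>j\<in>UNIV. R $ i $ j * B $ j $ i)"

lemma trace_mult_tr2: "trace (R ** B) = tr2 R B"
  unfolding trace_def tr2_def matrix_matrix_mult_def by simp

lemma psd_zero_entries:
  assumes "psd R" "\<forall>i. R $ i $ i = 0" shows "R $ i $ j = 0"
  using psd_entry[OF assms(1), of i j] assms(2) by simp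

lemma herm_cnj: "hermitian A \<Longrightarrow> cnj (A $ i $ j) = A $ j $ i"
  using herm_entry[of A j i] by simp

lemma rank_one_step:
  fixes R :: "'n::finite cmat"
  assumes P: "psd R" and dk: "R $ k $ k \<noteq> 0"
  defines "d \<equiv> Re (R $ k $ k)"
  defines "R' \<equiv> (\<chi> i j. R $ i $ j - R $ i $ k * cnj (R $ j $ k) / of_real d)"
  shows "psd R'" and "{i. R' $ i $ i \<noteq> 0} \<subseteq> {i. R $ i $ i \<noteq> 0} - {k}"
    and "psd B \<Longrightarrow> Re (tr2 R' B) \<le> Re (tr2 R B)"
proof -
  have H: "hermitian R" using P psd_def by blast
  have Rkk: "R $ k $ k = of_real d" unfolding d_def by (rule herm_diag_real[OF H])
  have d0: "d > 0"
  proof -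
    have "0 \<le> d" unfolding d_def by (rule psd_diag[OF P])
    moreover have "d \<noteq> 0" using dk Rkk by auto
    ultimately show ?thesis by simp
  qed
  have hR': "hermitian R'"
    unfolding hermitian_def adjoint_mat_def R'_def
    by (simp add: vec_eq_iff herm_cnj[OF H] mult.commute)
  show "psd R'"
    unfolding psd_def
  proof (intro conjI hR' allI)
    fix x :: "complex^'n"
    define w where "w = (\<Sum>i\<in>UNIV. cnj (x $ i) * R $ i $ k)"
    have w1: "w = sesq R x (axis k 1)"
      unfolding w_def sesq_def axis_c sum_delta_r by simp
    have w2: "(\<Sum>j\<in>UNIV. cnj (R $ j $ k) * x $ j) = cnj w"
      unfolding w_def by (simp add: mult.commute)
    have "(\<Sum>i\<in>UNIV. \<Sum>j\<in>UNIV. cnj (x $ i) * R' $ i $ j * x $ j)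
        = (\<Sum>i\<in>UNIV. \<Sum>j\<in>UNIV. cnj (x $ i) * R $ i $ j * x $ j
            - (cnj (x $ i) * R $ i $ k) * (cnj (R $ j $ k) * x $ j) / of_real d)"
      unfolding R'_def by (simp add: algebra_simps)
    also have "\<dots> = sesq R x x - (\<Sum>i\<in>UNIV. \<Sum>j\<in>UNIV. (cnj (x $ i) * R $ i $ k) * (cnj (R $ j $ k) * x $ j)) / of_real d"
      unfolding sesq_def by (simp add: sum_subtractf sum_divide_distrib)
    also have "(\<Sum>i\<in>UNIV. \<Sum>j\<in>UNIV. (cnj (x $ i) * R $ i $ k) * (cnj (R $ j $ k) * x $ j)) = w * cnj w"
      unfolding w2[symmetric] by (simp only: w_def sum_product)
    also have "w * cnj w = of_real ((cmod w)^2)" by (rule complex_norm_square[symmetric])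
    finally have eq: "(\<Sum>i\<in>UNIV. \<Sum>j\<in>UNIV. cnj (x $ i) * R' $ i $ j * x $ j) = sesq R x x - of_real ((cmod w)^2 / d)"
      by simp
    have cs: "(cmod w)^2 \<le> Re (sesq R x x) * d"
      using cs_psd[OF P, of x "axis k 1"] unfolding w1[symmetric] sesq_axis d_def .
    have "(cmod w)^2 / d \<le> Re (sesq R x x)" using cs d0 by (simp add: field_simps)
    then show "0 \<le> Re (\<Sum>i\<in>UNIV. \<Sum>j\<in>UNIV. cnj (x $ i) * R' $ i $ j * x $ j)"
      unfolding eq by simp
  qed
  show "{i. R' $ i $ i \<noteq> 0} \<subseteq> {i. R $ i $ i \<noteq> 0} - {k}"
  proof
    fix i assume "i \<in> {i. R' $ i $ i \<noteq> 0}"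
    then have ne: "R' $ i $ i \<noteq> 0" by simp
    have "i \<noteq> k"
    proof
      assume "i = k"
      then have "R' $ i $ i = R $ k $ k - R $ k $ k * cnj (R $ k $ k) / of_real d" unfolding R'_def by simp
      also have "\<dots> = 0" using Rkk d0 by simp
      finally show False using ne by simp
    qed
    moreover have "R $ i $ i \<noteq> 0"
    proof
      assume z: "R $ i $ i = 0"
      have "(cmod (R $ i $ k))^2 \<le> Re (R $ i $ i) * Re (R $ k $ k)" by (rule psd_entry_sq[OF P])
      then have "R $ i $ k = 0" using z by simp
      then have "R' $ i $ i = 0" unfolding R'_def using z by simp
      then show False using ne by simp
    qed
    ultimately show "i \<in> {i. R $ i $ i \<noteq> 0} - {k}" by simp
  qed
  assume PB: "psd B"
  define v :: "complex^'n" where "v = (\<chi> i. R $ i $ k)"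
  have "tr2 R B = (\<Sum>i\<in>UNIV. \<Sum>j\<in>UNIV. R' $ i $ j * B $ j $ i + (cnj (v $ j) * B $ j $ i * v $ i) / of_real d)"
    unfolding tr2_def R'_def v_def by (simp add: algebra_simps)
  also have "\<dots> = tr2 R' B + (\<Sum>i\<in>UNIV. \<Sum>j\<in>UNIV. cnj (v $ j) * B $ j $ i * v $ i) / of_real d"
    unfolding tr2_def by (simp add: sum.distrib sum_divide_distrib)
  also have "(\<Sum>i\<in>UNIV. \<Sum>j\<in>UNIV. cnj (v $ j) * B $ j $ i * v $ i) = sesq B v v"
    unfolding sesq_def by (rule sum.swap)
  finally have "Re (tr2 R B) = Re (tr2 R' B) + Re (sesq B v v) / d" by simp
  moreover have "0 \<le> Re (sesq B v v) / d" using psd_sesq[OF PB, of v] d0 by simp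
  ultimately show "Re (tr2 R' B) \<le> Re (tr2 R B)" by simp
qed

lemma tr2_nonneg_aux:
  fixes B :: "'n::finite cmat"
  assumes PB: "psd B"
  shows "\<forall>R::'n cmat. psd R \<and> card {i. R $ i $ i \<noteq> 0} = n \<longrightarrow> 0 \<le> Re (tr2 R B)"
proof (induction n rule: less_induct)
  case (less n)
  show ?case
  proof (intro allI impI, elim conjE)
    fix R :: "'n cmat" assume P: "psd R" and c: "card {i. R $ i $ i \<noteq> 0} = n"
    show "0 \<le> Re (tr2 R B)"
    proof (cases "\<forall>i. R $ i $ i = 0")
      case True
      then have "tr2 R B = 0" unfolding tr2_def using psd_zero_entries[OF P True] by simp
      then show ?thesis by simp
    next
      case False
      then obtain k where dk: "R $ k $ k \<noteq> 0" by blast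
      define R' where "R' = (\<chi> i j. R $ i $ j - R $ i $ k * cnj (R $ j $ k) / of_real (Re (R $ k $ k)))"
      note st = rank_one_step[OF P dk, folded R'_def]
      have "card {i. R' $ i $ i \<noteq> 0} \<le> card ({i. R $ i $ i \<noteq> 0} - {k})"
        by (rule card_mono[OF _ st(2)]) simp
      also have "\<dots> < n" using c dk card_Diff1_less[of "{i. R $ i $ i \<noteq> 0}" k] by simp
      finally have "0 \<le> Re (tr2 R' B)" using less.IH st(1) by blast
      also have "\<dots> \<le> Re (tr2 R B)" by (rule st(3)[OF PB])
      finally show ?thesis .
    qed
  qed
qed

lemma trace_psd_nonneg:
  fixes R B :: "'n::finite cmat"
  assumes "psd R" "psd B"
  shows "0 \<le> Re (trace (R ** B))"
  using tr2_nonneg_aux[OF assms(2)] assms(1) unfolding trace_mult_tr2 by blast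

lemma trace_upper:
  fixes R A :: "'n::finite cmat"
  assumes D: "density_matrix R" and PA: "psd A"
  shows "Re (trace (R ** A)) \<le> real CARD('n) * (\<Sum>i\<in>UNIV. Re (A $ i $ i))"
proof -
  have PR: "psd R" using D density_matrix_def by blast
  have tr1: "(\<Sum>i\<in>UNIV. Re (R $ i $ i)) = 1"
    using D unfolding density_matrix_def trace_def by (metis Re_sum one_complex.simps(1))
  have le1: "Re (R $ i $ i) \<le> 1" for i
  proof -
    have "Re (R $ i $ i) \<le> (\<Sum>i\<in>UNIV. Re (R $ i $ i))"
      by (rule member_le_sum) (auto simp: psd_diag[OF PR])
    then show ?thesis using tr1 by simp
  qed
  have rij: "cmod (R $ i $ j) \<le> 1" for i j
    using psd_entry[OF PR, of i j] le1[of i] le1[of j] by simp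
  have "Re (trace (R ** A)) = (\<Sum>i\<in>UNIV. \<Sum>j\<in>UNIV. Re (R $ i $ j * A $ j $ i))"
    unfolding trace_mult_tr2 tr2_def by (simp add: Re_sum)
  also have "\<dots> \<le> (\<Sum>i\<in>UNIV. \<Sum>j\<in>UNIV. (Re (A $ j $ j) + Re (A $ i $ i)) / 2)"
  proof (intro sum_mono)
    fix i j
    have "Re (R $ i $ j * A $ j $ i) \<le> cmod (R $ i $ j * A $ j $ i)" by (rule complex_Re_le_cmod)
    also have "\<dots> = cmod (R $ i $ j) * cmod (A $ j $ i)" by (rule norm_mult)
    also have "\<dots> \<le> 1 * cmod (A $ j $ i)" by (rule mult_right_mono[OF rij]) simp
    also have "\<dots> \<le> (Re (A $ j $ j) + Re (A $ i $ i)) / 2" using psd_entry[OF PA, of j i] by simp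
    finally show "Re (R $ i $ j * A $ j $ i) \<le> (Re (A $ j $ j) + Re (A $ i $ i)) / 2" .
  qed
  also have "\<dots> = real CARD('n) * (\<Sum>i\<in>UNIV. Re (A $ i $ i))"
    by (simp add: sum.distrib add_divide_distrib sum_divide_distrib[symmetric] sum_distrib_left[symmetric])
  finally show ?thesis .
qed

definition recfn :: "nat \<Rightarrow> (nat list \<Rightarrow> nat) \<Rightarrow> bool" where
  "recfn k F \<longleftrightarrow> (\<exists>r. \<forall>xs. length xs = k \<longrightarrow> rec_eval r xs (F xs))"

lemma recfn_cong: "recfn k F \<Longrightarrow> (\<And>xs. length xs = k \<Longrightarrow> F xs = G xs) \<Longrightarrow> recfn k G"
  unfolding recfn_def by metis

lemma recfn_zero: "recfn k (\<lambda>_. 0)"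
  unfolding recfn_def by (blast intro: rec_eval.zero)

lemma recfn_id: "i < k \<Longrightarrow> recfn k (\<lambda>xs. xs ! i)"
  unfolding recfn_def by (metis rec_eval.proj)

lemma recfn_comp1:
  assumes "recfn 1 F" "recfn k G" shows "recfn k (\<lambda>xs. F [G xs])"
proof -
  obtain f where f: "\<And>ys. length ys = 1 \<Longrightarrow> rec_eval f ys (F ys)" using assms(1) recfn_def by blast
  obtain g where g: "\<And>xs. length xs = k \<Longrightarrow> rec_eval g xs (G xs)" using assms(2) recfn_def by blast
  have "rec_eval (Cn f [g]) xs (F [G xs])" if "length xs = k" for xs
    by (rule rec_eval.comp[where ys="[G xs]"]) (auto simp: g[OF that] f)
  then show ?thesis unfolding recfn_def by blast
qed

lemma recfn_comp2:
  assumes "recfn 2 F" "recfn k G1" "recfn k G2" shows "recfn k (\<lambda>xs. F [G1 xs, G2 xs])"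
proof -
  obtain f where f: "\<And>ys. length ys = 2 \<Longrightarrow> rec_eval f ys (F ys)" using assms(1) recfn_def by blast
  obtain g1 where g1: "\<And>xs. length xs = k \<Longrightarrow> rec_eval g1 xs (G1 xs)" using assms(2) recfn_def by blast
  obtain g2 where g2: "\<And>xs. length xs = k \<Longrightarrow> rec_eval g2 xs (G2 xs)" using assms(3) recfn_def by blast
  have "rec_eval (Cn f [g1, g2]) xs (F [G1 xs, G2 xs])" if "length xs = k" for xs
    by (rule rec_eval.comp[where ys="[G1 xs, G2 xs]"]) (auto simp: g1[OF that] g2[OF that] f)
  then show ?thesis unfolding recfn_def by blast
qed

lemma recfn_suc1: "recfn 1 (\<lambda>ys. Suc (ys ! 0))"
proof -
  have "rec_eval Sc ys (Suc (ys ! 0))" if "length ys = 1" for ys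
    using that by (cases ys) (auto intro: rec_eval.succ)
  then show ?thesis unfolding recfn_def by blast
qed

lemma recfn_suc: "recfn k G \<Longrightarrow> recfn k (\<lambda>xs. Suc (G xs))"
  using recfn_comp1[OF recfn_suc1] by simp

lemma recfn_pr:
  assumes "recfn k F" "recfn kb G" "ka = Suc k" "kb = Suc (Suc k)"
  shows "recfn ka (\<lambda>xs. rec_nat (F (tl xs)) (\<lambda>n r. G (n # r # tl xs)) (hd xs))"
proof -
  obtain f where f: "\<And>ys. length ys = k \<Longrightarrow> rec_eval f ys (F ys)" using assms(1) recfn_def by blast
  obtain g where g: "\<And>xs. length xs = Suc (Suc k) \<Longrightarrow> rec_eval g xs (G xs)" using assms(2,4) recfn_def by blast
  have main: "rec_eval (Pr f g) (n # ys) (rec_nat (F ys) (\<lambda>n r. G (n # r # ys)) n)" if "length ys = k" for n ys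
  proof (induction n)
    case 0 then show ?case using f[OF that] by (simp add: rec_eval.pr0)
  next
    case (Suc n)
    show ?case using rec_eval.prS[OF Suc g] that by simp
  qed
  have "rec_eval (Pr f g) xs (rec_nat (F (tl xs)) (\<lambda>n r. G (n # r # tl xs)) (hd xs))" if "length xs = Suc k" for xs
    using main[of "tl xs" "hd xs"] that by (cases xs) auto
  then show ?thesis unfolding recfn_def assms(3) by blast
qed

lemma recfn_add2: "recfn 2 (\<lambda>xs. xs ! 0 + xs ! 1)"
proof -
  have "recfn 2 (\<lambda>xs. rec_nat ((\<lambda>ys. ys ! 0) (tl xs)) (\<lambda>n r. (\<lambda>zs. Suc (zs ! 1)) (n # r # tl xs)) (hd xs))"
    by (rule recfn_pr[where k=1]) (auto intro!: recfn_id recfn_suc)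
  then show ?thesis
  proof (rule recfn_cong)
    fix xs :: "nat list" assume "length xs = 2"
    then obtain x y where "xs = [x, y]" by (metis (no_types) length_0_conv length_Suc_conv numeral_2_eq_2)
    then show "rec_nat (tl xs ! 0) (\<lambda>n r. Suc ((n # r # tl xs) ! 1)) (hd xs) = xs ! 0 + xs ! 1"
      by (induction x arbitrary: xs) auto
  qed
qed

lemma recfn_add: "recfn k A \<Longrightarrow> recfn k B \<Longrightarrow> recfn k (\<lambda>xs. A xs + B xs)"
  using recfn_comp2[OF recfn_add2] by simp

lemma recfn_mult2: "recfn 2 (\<lambda>xs. xs ! 0 * xs ! 1)"
proof -
  have "recfn 2 (\<lambda>xs. rec_nat ((\<lambda>ys. 0) (tl xs)) (\<lambda>n r. (\<lambda>zs. zs ! 1 + zs ! 2) (n # r # tl xs)) (hd xs))"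
    by (rule recfn_pr[where k=1]) (auto intro!: recfn_id recfn_add recfn_zero)
  then show ?thesis
  proof (rule recfn_cong)
    fix xs :: "nat list" assume "length xs = 2"
    then obtain x y where "xs = [x, y]" by (metis (no_types) length_0_conv length_Suc_conv numeral_2_eq_2)
    then show "rec_nat 0 (\<lambda>n r. (n # r # tl xs) ! 1 + (n # r # tl xs) ! 2) (hd xs) = xs ! 0 * xs ! 1"
      by (induction x arbitrary: xs) auto
  qed
qed

lemma recfn_mult: "recfn k A \<Longrightarrow> recfn k B \<Longrightarrow> recfn k (\<lambda>xs. A xs * B xs)"
  using recfn_comp2[OF recfn_mult2] by simp

lemma recfn_pred1: "recfn 1 (\<lambda>xs. xs ! 0 - 1)"
proof -
  have "recfn 1 (\<lambda>xs. rec_nat ((\<lambda>ys. 0) (tl xs)) (\<lambda>n r. (\<lambda>zs. zs ! 0) (n # r # tl xs)) (hd xs))"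
    by (rule recfn_pr[where k=0]) (auto intro!: recfn_id recfn_zero)
  then show ?thesis
  proof (rule recfn_cong)
    fix xs :: "nat list" assume "length xs = 1"
    then obtain x where "xs = [x]" by (metis length_0_conv length_Suc_conv One_nat_def)
    then show "rec_nat 0 (\<lambda>n r. (n # r # tl xs) ! 0) (hd xs) = xs ! 0 - 1"
      by (cases x) auto
  qed
qed

lemma recfn_sub2: "recfn 2 (\<lambda>xs. xs ! 1 - xs ! 0)"
proof -
  have "recfn 2 (\<lambda>xs. rec_nat ((\<lambda>ys. ys ! 0) (tl xs)) (\<lambda>n r. (\<lambda>zs. zs ! 1 - 1) (n # r # tl xs)) (hd xs))"
  proof (rule recfn_pr[where k=1])
    show "recfn 1 (\<lambda>ys. ys ! 0)" by (rule recfn_id) simp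
    have "recfn 3 (\<lambda>zs. [zs ! 1] ! 0 - 1)"
      by (rule recfn_comp1[OF recfn_pred1 recfn_id]) simp
    then show "recfn 3 (\<lambda>zs. zs ! 1 - 1)" by simp
  qed simp_all
  then show ?thesis
  proof (rule recfn_cong)
    fix xs :: "nat list" assume "length xs = 2"
    then obtain x y where "xs = [x, y]" by (metis (no_types) length_0_conv length_Suc_conv numeral_2_eq_2)
    then show "rec_nat (tl xs ! 0) (\<lambda>n r. (n # r # tl xs) ! 1 - 1) (hd xs) = xs ! 1 - xs ! 0"
      by (induction x arbitrary: xs) auto
  qed
qed

lemma recfn_sub: "recfn k A \<Longrightarrow> recfn k B \<Longrightarrow> recfn k (\<lambda>xs. A xs - B xs)"
  using recfn_comp2[OF recfn_sub2, of k B A] by simp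

lemma recfn_const: "recfn k (\<lambda>_. c)"
  by (induction c) (auto intro: recfn_zero recfn_suc)

lemma recfn_if:
  assumes "recfn k X" "recfn k Y" "recfn k U" "recfn k V"
  shows "recfn k (\<lambda>xs. if Y xs < X xs then U xs else V xs)"
proof -
  have "recfn k (\<lambda>xs. U xs * (1 - (1 - (X xs - Y xs))) + V xs * (1 - (X xs - Y xs)))"
    by (intro recfn_add recfn_mult recfn_sub recfn_const assms)
  then show ?thesis by (rule recfn_cong) auto
qed

lemma total_recursive2_recfn: "total_recursive2 a \<longleftrightarrow> recfn 2 (\<lambda>xs. a (xs ! 0) (xs ! 1))"
proof
  assume "total_recursive2 a"
  then obtain r where r: "\<And>x y. rec_eval r [x, y] (a x y)" unfolding total_recursive2_def by blast
  have "rec_eval r xs (a (xs ! 0) (xs ! 1))" if "length xs = 2" for xs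
  proof -
    obtain x y where "xs = [x, y]" using \<open>length xs = 2\<close>
      by (metis (no_types) length_0_conv length_Suc_conv numeral_2_eq_2)
    then show ?thesis using r by simp
  qed
  then show "recfn 2 (\<lambda>xs. a (xs ! 0) (xs ! 1))" unfolding recfn_def by blast
next
  assume "recfn 2 (\<lambda>xs. a (xs ! 0) (xs ! 1))"
  then obtain r where "\<And>xs. length xs = 2 \<Longrightarrow> rec_eval r xs (a (xs ! 0) (xs ! 1))" unfolding recfn_def by blast
  then have "rec_eval r [x, y] (a x y)" for x y by (metis length_Cons list.size(3) numeral_2_eq_2 nth_Cons_0 nth_Cons_Suc One_nat_def)
  then show "total_recursive2 a" unfolding total_recursive2_def by blast
qed

lemma recfn_app2:
  assumes "total_recursive2 a" "recfn k U" "recfn k V"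
  shows "recfn k (\<lambda>xs. a (U xs) (V xs))"
  using recfn_comp2[OF assms(1)[unfolded total_recursive2_recfn] assms(2,3)] by simp


lemma rec_rat_running_max:
  assumes "rec_rat_fun p"
  shows "\<exists>g. rec_rat_fun g \<and> (\<forall>n s. p n s \<le> g n s) \<and> (\<forall>n s. g n s \<le> g (Suc n) s)
            \<and> (\<forall>n s. \<exists>k. g n s = p k s)"
proof -
  obtain a b d where ta: "total_recursive2 a" and tb: "total_recursive2 b" and td: "total_recursive2 d"
    and pf: "\<And>n s. p n s = (of_nat (a n (str_code s)) - of_nat (b n (str_code s))) / of_nat (Suc (d n (str_code s)))"
    using assms unfolding rec_rat_fun_def by blast
  define val :: "nat \<Rightarrow> nat \<Rightarrow> rat" where
    "val k c = (of_nat (a k c) - of_nat (b k c)) / of_nat (Suc (d k c))" for k c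
  define better where
    "better k r c \<longleftrightarrow> a r c * Suc (d k c) + b k c * Suc (d r c) < a k c * Suc (d r c) + b r c * Suc (d k c)"
    for k r c
  have bv: "better k r c \<longleftrightarrow> val r c < val k c" for k r c
  proof -
    have "val r c < val k c \<longleftrightarrow>
        (of_nat (a r c) - of_nat (b r c)) * of_nat (Suc (d k c)) < ((of_nat (a k c) - of_nat (b k c)) * of_nat (Suc (d r c)) :: rat)"
      unfolding val_def by (simp add: divide_less_eq less_divide_eq del: of_nat_Suc)
    also have "\<dots> \<longleftrightarrow> (of_nat (a r c * Suc (d k c) + b k c * Suc (d r c)) :: rat) < of_nat (a k c * Suc (d r c) + b r c * Suc (d k c))"
      by (simp only: of_nat_add of_nat_mult) (simp add: algebra_simps del: of_nat_Suc)
    also have "\<dots> \<longleftrightarrow> better k r c" unfolding better_def by (rule of_nat_less_iff)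
    finally show ?thesis by simp
  qed
  define idx where "idx n c = rec_nat 0 (\<lambda>n r. if better (Suc n) r c then Suc n else r) n" for n c
  have idx0: "idx 0 c = 0" for c unfolding idx_def by simp
  have idxS: "idx (Suc n) c = (if better (Suc n) (idx n c) c then Suc n else idx n c)" for n c
    unfolding idx_def by simp
  define g where "g n s = val (idx n (str_code s)) (str_code s)" for n s
  have pv: "p n s = val n (str_code s)" for n s unfolding pf val_def by simp
  have p_le: "p n s \<le> g n s" for n s
  proof (cases n)
    case 0 then show ?thesis unfolding g_def pv by (simp add: idx0)
  next
    case (Suc m)
    then show ?thesis unfolding g_def pv by (auto simp: idxS bv)
  qed
  have mono: "g n s \<le> g (Suc n) s" for n s
    unfolding g_def idxS bv by auto
  have ex: "\<exists>k. g n s = p k s" for n s unfolding g_def pv by blast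
  have ridx: "recfn 2 (\<lambda>xs. idx (xs ! 0) (xs ! 1))"
  proof -
    have "recfn 2 (\<lambda>xs. rec_nat ((\<lambda>_. 0) (tl xs))
       (\<lambda>n r. (\<lambda>zs. if a (zs ! 1) (zs ! 2) * Suc (d (Suc (zs ! 0)) (zs ! 2)) + b (Suc (zs ! 0)) (zs ! 2) * Suc (d (zs ! 1) (zs ! 2))
                      < a (Suc (zs ! 0)) (zs ! 2) * Suc (d (zs ! 1) (zs ! 2)) + b (zs ! 1) (zs ! 2) * Suc (d (Suc (zs ! 0)) (zs ! 2))
                    then Suc (zs ! 0) else zs ! 1) (n # r # tl xs)) (hd xs))"
    proof (rule recfn_pr[where k=1 and kb=3])
      show "recfn 3 (\<lambda>zs. if a (zs ! 1) (zs ! 2) * Suc (d (Suc (zs ! 0)) (zs ! 2)) + b (Suc (zs ! 0)) (zs ! 2) * Suc (d (zs ! 1) (zs ! 2))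
                      < a (Suc (zs ! 0)) (zs ! 2) * Suc (d (zs ! 1) (zs ! 2)) + b (zs ! 1) (zs ! 2) * Suc (d (Suc (zs ! 0)) (zs ! 2))
                    then Suc (zs ! 0) else zs ! 1)"
        by (intro recfn_if recfn_add recfn_mult recfn_suc recfn_app2[OF ta] recfn_app2[OF tb] recfn_app2[OF td] recfn_id; simp)
    qed (simp_all add: recfn_zero)
    then show ?thesis
    proof (rule recfn_cong)
      fix xs :: "nat list" assume "length xs = 2"
      then obtain x y where "xs = [x, y]" by (metis (no_types) length_0_conv length_Suc_conv numeral_2_eq_2)
      then show "rec_nat ((\<lambda>_. 0) (tl xs))
       (\<lambda>n r. (\<lambda>zs. if a (zs ! 1) (zs ! 2) * Suc (d (Suc (zs ! 0)) (zs ! 2)) + b (Suc (zs ! 0)) (zs ! 2) * Suc (d (zs ! 1) (zs ! 2))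
                      < a (Suc (zs ! 0)) (zs ! 2) * Suc (d (zs ! 1) (zs ! 2)) + b (zs ! 1) (zs ! 2) * Suc (d (Suc (zs ! 0)) (zs ! 2))
                    then Suc (zs ! 0) else zs ! 1) (n # r # tl xs)) (hd xs) = idx (xs ! 0) (xs ! 1)"
        unfolding idx_def better_def by (simp cong: if_cong)
    qed
  qed
  have tr: "total_recursive2 (\<lambda>n c. h (idx n c) c)" if "total_recursive2 h" for h
    unfolding total_recursive2_recfn
    by (rule recfn_app2[OF that ridx]) (simp add: recfn_id)
  have "rec_rat_fun g"
    unfolding rec_rat_fun_def
    apply (rule exI[of _ "\<lambda>n c. a (idx n c) c"])
    apply (rule exI[of _ "\<lambda>n c. b (idx n c) c"])
    apply (rule exI[of _ "\<lambda>n c. d (idx n c) c"])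
    using tr[OF ta] tr[OF tb] tr[OF td] by (simp add: g_def val_def)
  then show ?thesis using p_le mono ex by blast
qed


lemma sm_entry: "((k::real) *\<^sub>R mat 1 :: 'n::finite cmat) $ i $ j = (if i = j then of_real k else 0)"
  unfolding vector_scaleR_component mat_def by (simp add: of_real_def)

lemma herm_sm: "hermitian ((k::real) *\<^sub>R mat 1 :: 'n::finite cmat)"
  unfolding hermitian_def adjoint_mat_def vec_eq_iff by (simp only: sm_entry vec_lambda_beta) simp

lemma psd_sm: assumes "0 \<le> k" shows "psd ((k::real) *\<^sub>R mat 1 :: 'n::finite cmat)"
  unfolding psd_def
proof (intro conjI herm_sm allI)
  fix x :: "complex^'n"
  have "(\<Sum>i\<in>UNIV. \<Sum>j\<in>UNIV. cnj (x $ i) * (k *\<^sub>R mat 1 :: 'n cmat) $ i $ j * x $ j)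
      = (\<Sum>i\<in>UNIV. of_real k * (cnj (x $ i) * x $ i))"
  proof (intro sum.cong refl)
    fix i
    have "(\<Sum>j\<in>UNIV. cnj (x $ i) * (k *\<^sub>R mat 1 :: 'n cmat) $ i $ j * x $ j)
        = (\<Sum>j\<in>UNIV. if i = j then cnj (x $ i) * of_real k * x $ j else 0)"
      by (intro sum.cong refl) (simp only: sm_entry, simp)
    also have "\<dots> = of_real k * (cnj (x $ i) * x $ i)" by simp
    finally show "(\<Sum>j\<in>UNIV. cnj (x $ i) * (k *\<^sub>R mat 1 :: 'n cmat) $ i $ j * x $ j) = of_real k * (cnj (x $ i) * x $ i)" .
  qed
  also have "Re \<dots> = (\<Sum>i\<in>UNIV. k * (cmod (x $ i))^2)"
    by (simp add: Re_sum complex_norm_square[symmetric] mult.commute[of "cnj _"])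
  also have "\<dots> \<ge> 0" using assms by (intro sum_nonneg) simp
  finally show "0 \<le> Re (\<Sum>i\<in>UNIV. \<Sum>j\<in>UNIV. cnj (x $ i) * (k *\<^sub>R mat 1 :: 'n cmat) $ i $ j * x $ j)" .
qed

lemma tr2_diff: "tr2 R (A - B) = tr2 R A - tr2 R B"
  unfolding tr2_def by (simp add: algebra_simps sum_subtractf)

lemma tr2_sm: "tr2 R ((k::real) *\<^sub>R mat 1) = of_real k * trace R"
proof -
  have "tr2 R (k *\<^sub>R mat 1) = (\<Sum>i\<in>UNIV. \<Sum>j\<in>UNIV. if j = i then R $ i $ j * of_real k else 0)"
    unfolding tr2_def by (intro sum.cong refl) (simp only: sm_entry, simp)
  also have "\<dots> = (\<Sum>i\<in>UNIV. of_real k * R $ i $ i)" by (simp add: mult.commute)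
  finally show ?thesis by (simp add: trace_def sum_distrib_left)
qed

lemma rec_rat_zero: "rec_rat_fun (\<lambda>n s. 0)"
proof -
  have "total_recursive2 (\<lambda>x y. 0)" unfolding total_recursive2_def by (blast intro: rec_eval.zero)
  then show ?thesis unfolding rec_rat_fun_def by (intro exI[of _ "\<lambda>x y. 0"]) simp
qed

lemma lcsm_to_povm:
  assumes "lower_computable_semi_measure m"
  shows "lower_computable_semi_POVM (\<lambda>s. m s *\<^sub>R (mat 1 :: 'n::finite cmat))"
proof -
  have nn: "\<And>s. 0 \<le> m s" and sm: "m summable_on UNIV" and le1: "(\<Sum>\<^sub>\<infinity>s. m s) \<le> 1"
    using assms unfolding lower_computable_semi_measure_def semi_measure_def by auto
  obtain f where rf: "rec_rat_fun f" and lim: "\<And>s. (\<lambda>n. real_of_rat (f n s)) \<longlonglongrightarrow> m s"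
    and mono: "\<And>n s. f n s \<le> f (Suc n) s"
    using assms unfolding lower_computable_semi_measure_def by blast
  have fle: "real_of_rat (f n s) \<le> m s" for n s
  proof (rule incseq_le[OF _ lim])
    show "incseq (\<lambda>n. real_of_rat (f n s))" by (rule incseq_SucI) (simp add: of_rat_less_eq mono)
  qed
  have sp: "semi_POVM (\<lambda>s. m s *\<^sub>R (mat 1 :: 'n cmat))"
    unfolding semi_POVM_def
  proof (intro conjI allI)
    show "psd (m s *\<^sub>R (mat 1 :: 'n cmat))" for s by (rule psd_sm[OF nn])
    show "(\<lambda>s. m s *\<^sub>R (mat 1 :: 'n cmat)) summable_on UNIV" using sm by (intro summable_on_scaleR_left)
    have "(\<Sum>\<^sub>\<infinity>s. m s *\<^sub>R (mat 1 :: 'n cmat)) = (\<Sum>\<^sub>\<infinity>s. m s) *\<^sub>R mat 1"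
      using sm by (intro infsum_scaleR_left)
    moreover have "loewner_le ((\<Sum>\<^sub>\<infinity>s. m s) *\<^sub>R (mat 1 :: 'n cmat)) (mat 1)"
    proof -
      have "(mat 1 :: 'n cmat) - (\<Sum>\<^sub>\<infinity>s. m s) *\<^sub>R mat 1 = (1 - (\<Sum>\<^sub>\<infinity>s. m s)) *\<^sub>R mat 1"
        by (simp add: algebra_simps)
      moreover have "hermitian (mat 1 :: 'n cmat)" using herm_sm[of 1] by simp
      moreover have "psd ((1 - (\<Sum>\<^sub>\<infinity>s. m s)) *\<^sub>R (mat 1 :: 'n cmat))" using le1 by (intro psd_sm) simp
      ultimately show ?thesis unfolding loewner_le_def using herm_sm[of "(\<Sum>\<^sub>\<infinity>s. m s)"] by simp
    qed
    ultimately show "loewner_le (\<Sum>\<^sub>\<infinity>s. m s *\<^sub>R (mat 1 :: 'n cmat)) (mat 1)" by simp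
  qed
  define F where "F n s = real_of_rat (f n s) *\<^sub>R (mat 1 :: 'n cmat)" for n s
  have rh: "rec_herQ_fun F"
    unfolding rec_herQ_fun_def
  proof (intro conjI allI)
    fix n s
    show "her_Q (F n s)" unfolding her_Q_def F_def gauss_rat_def sm_entry
      by (simp add: herm_sm)
  next
    fix i j :: 'n
    show "\<exists>p q. rec_rat_fun p \<and> rec_rat_fun q \<and>
        (\<forall>n s. Re (F n s $ i $ j) = real_of_rat (p n s) \<and> Im (F n s $ i $ j) = real_of_rat (q n s))"
    proof (cases "i = j")
      case True
      show ?thesis unfolding F_def sm_entry
        apply (rule exI[of _ f])
        apply (rule exI[of _ "\<lambda>n s. 0"])
        using True rf rec_rat_zero by simp
    next
      case False
      show ?thesis unfolding F_def sm_entry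
        apply (rule exI[of _ "\<lambda>n s. 0"])
        apply (rule exI[of _ "\<lambda>n s. 0"])
        using False rec_rat_zero by simp
    qed
  qed
  have conv: "(\<lambda>n. F n s) \<longlonglongrightarrow> m s *\<^sub>R mat 1" for s
    unfolding F_def by (intro tendsto_scaleR lim tendsto_const)
  have lo: "loewner_le (F n s) (m s *\<^sub>R mat 1)" for n s
  proof -
    have "m s *\<^sub>R (mat 1 :: 'n cmat) - F n s = (m s - real_of_rat (f n s)) *\<^sub>R mat 1"
      unfolding F_def by (simp add: algebra_simps)
    moreover have "psd ((m s - real_of_rat (f n s)) *\<^sub>R (mat 1 :: 'n cmat))" using fle[of n s] by (intro psd_sm) simp
    ultimately show ?thesis unfolding loewner_le_def F_def using herm_sm[of "real_of_rat (f n s)"] herm_sm[of "m s"] by simp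
  qed
  show ?thesis unfolding lower_computable_semi_POVM_def using sp rh conv lo by blast
qed

lemma bl_diag: "bounded_linear (\<lambda>A::'n::finite cmat. Re (A $ i $ i))"
  by (intro bounded_linear_compose[OF bounded_linear_Re]
        bounded_linear_compose[OF bounded_linear_vec_nth bounded_linear_vec_nth])

lemma diag_lcsm:
  fixes M :: "bstring \<Rightarrow> 'n::finite cmat"
  assumes "lower_computable_semi_POVM M"
  shows "lower_computable_semi_measure (\<lambda>s. Re (M s $ i $ i))"
proof -
  have ps: "\<And>s. psd (M s)" and sm: "M summable_on UNIV" and le: "loewner_le (\<Sum>\<^sub>\<infinity>s. M s) (mat 1)"
    using assms unfolding lower_computable_semi_POVM_def semi_POVM_def by auto
  obtain f where rh: "rec_herQ_fun f" and conv: "\<And>s. (\<lambda>n. f n s) \<longlonglongrightarrow> M s"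
    and lo: "\<And>n s. loewner_le (f n s) (M s)"
    using assms unfolding lower_computable_semi_POVM_def by blast
  have hs: "((\<lambda>s. Re (M s $ i $ i)) has_sum Re ((\<Sum>\<^sub>\<infinity>s. M s) $ i $ i)) UNIV"
    using has_sum_bounded_linear[OF bl_diag has_sum_infsum[OF sm], of i] by simp
  have "Re ((\<Sum>\<^sub>\<infinity>s. M s) $ i $ i) \<le> 1"
  proof -
    have "psd (mat 1 - (\<Sum>\<^sub>\<infinity>s. M s))" using le loewner_le_def by blast
    from psd_diag[OF this, of i] show ?thesis by (simp add: mat_def)
  qed
  then have smeas: "semi_measure (\<lambda>s. Re (M s $ i $ i))"
    unfolding semi_measure_def using hs psd_diag[OF ps] by (auto simp: has_sum_imp_summable infsumI)
  obtain p q where rp: "rec_rat_fun p" and pe: "\<And>n s. Re (f n s $ i $ i) = real_of_rat (p n s)"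
    using rh unfolding rec_herQ_fun_def by blast
  obtain g where rg: "rec_rat_fun g" and pg: "\<And>n s. p n s \<le> g n s" and gm: "\<And>n s. g n s \<le> g (Suc n) s"
    and gex: "\<And>n s. \<exists>k. g n s = p k s"
    using rec_rat_running_max[OF rp] by blast
  have pM: "real_of_rat (p n s) \<le> Re (M s $ i $ i)" for n s
  proof -
    have "psd (M s - f n s)" using lo loewner_le_def by blast
    from psd_diag[OF this, of i] show ?thesis using pe[of n s] by simp
  qed
  have plim: "(\<lambda>n. real_of_rat (p n s)) \<longlonglongrightarrow> Re (M s $ i $ i)" for s
    unfolding pe[symmetric] by (intro tendsto_intros conv)
  have glim: "(\<lambda>n. real_of_rat (g n s)) \<longlonglongrightarrow> Re (M s $ i $ i)" for s
  proof (rule tendsto_sandwich[OF _ _ plim tendsto_const])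
    show "\<forall>\<^sub>F n in sequentially. real_of_rat (p n s) \<le> real_of_rat (g n s)"
      using pg by (simp add: of_rat_less_eq)
    show "\<forall>\<^sub>F n in sequentially. real_of_rat (g n s) \<le> Re (M s $ i $ i)"
    proof (rule always_eventually, rule allI)
      fix n obtain k where "g n s = p k s" using gex by blast
      then show "real_of_rat (g n s) \<le> Re (M s $ i $ i)" using pM by simp
    qed
  qed
  show ?thesis unfolding lower_computable_semi_measure_def using smeas rg glim gm by blast
qed

theorem mainTheorem8:
  fixes m :: "bstring \<Rightarrow> real" and M :: "bstring \<Rightarrow> complex^'n::finite^'n"
  assumes "universal_probability m" and "universal_semi_POVM M"
  shows "\<exists>c1>0. \<exists>c2>0. \<forall>\<rho>::complex^'n^'n. \<forall>s. density_matrix \<rho> \<longrightarrow>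
           c1 * m s \<le> Re (trace (\<rho> ** M s)) \<and> Re (trace (\<rho> ** M s)) \<le> c2 * m s"
proof -
  have lm: "lower_computable_semi_measure m" and um: "\<And>r. lower_computable_semi_measure r \<Longrightarrow> \<exists>c>0. \<forall>s. c * r s \<le> m s"
    using assms(1) unfolding universal_probability_def by auto
  have lM: "lower_computable_semi_POVM M"
    and uM: "\<And>R::bstring \<Rightarrow> 'n cmat. lower_computable_semi_POVM R \<Longrightarrow> \<exists>c>0. \<forall>s. loewner_le (c *\<^sub>R R s) (M s)"
    using assms(2) unfolding universal_semi_POVM_def by auto
  obtain c where c0: "c > 0" and cM: "\<And>s. loewner_le (c *\<^sub>R (m s *\<^sub>R (mat 1 :: 'n cmat))) (M s)"
    using uM[OF lcsm_to_povm[OF lm]] by blast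
  have "\<forall>i. \<exists>C>0. \<forall>s. C * Re (M s $ i $ i) \<le> m s"
    using um[OF diag_lcsm[OF lM]] by blast
  then obtain C where C0: "\<And>i. C i > 0" and CM: "\<And>i s. C i * Re (M s $ i $ i) \<le> m s"
    by metis
  define c2 where "c2 = real CARD('n) * (\<Sum>i\<in>UNIV. 1 / C i)"
  have c2pos: "c2 > 0" unfolding c2_def using C0
    by (intro mult_pos_pos sum_pos) auto
  have main: "\<forall>\<rho>::'n cmat. \<forall>s. density_matrix \<rho> \<longrightarrow>
           c * m s \<le> Re (trace (\<rho> ** M s)) \<and> Re (trace (\<rho> ** M s)) \<le> c2 * m s"
  proof (intro allI impI conjI)
    fix \<rho> :: "'n cmat" and s assume D: "density_matrix \<rho>"
    have Pr: "psd \<rho>" and tr1: "trace \<rho> = 1" using D density_matrix_def by auto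
    have "psd (M s - (c * m s) *\<^sub>R (mat 1 :: 'n cmat))" using cM[of s] unfolding loewner_le_def scaleR_scaleR by blast
    from trace_psd_nonneg[OF Pr this]
    have "0 \<le> Re (trace (\<rho> ** M s)) - c * m s"
      unfolding trace_mult_tr2 tr2_diff tr2_sm tr1 by simp
    then show "c * m s \<le> Re (trace (\<rho> ** M s))" by simp
    have PM: "psd (M s)" using lM unfolding lower_computable_semi_POVM_def semi_POVM_def by blast
    have "Re (trace (\<rho> ** M s)) \<le> real CARD('n) * (\<Sum>i\<in>UNIV. Re (M s $ i $ i))"
      by (rule trace_upper[OF D PM])
    also have "\<dots> \<le> real CARD('n) * (\<Sum>i\<in>UNIV. m s / C i)"
    proof (intro mult_left_mono sum_mono)
      fix i
      show "Re (M s $ i $ i) \<le> m s / C i" using CM[of i s] C0[of i] by (simp add: field_simps mult.commute)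
    qed simp
    also have "\<dots> = c2 * m s" unfolding c2_def by (simp add: sum_distrib_left sum_distrib_right)
    finally show "Re (trace (\<rho> ** M s)) \<le> c2 * m s" .
  qed
  then show ?thesis using c0 c2pos by blast
qed
end
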